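(* Let $\mathcal{X}, \mathcal{T} \in M_{2^k}(R)$ be two Suslin matrices with $\mathcal{X}\overline{\mathcal{X}} =0$, and let $\mathcal{S} = \begin{pmatrix} a & \mathcal{T}\\ -\overline{\mathcal{T}} & b \end{pmatrix}$. Then \[\begin{pmatrix} 1 & \mathcal{X}\\ 0 & 1 \end{pmatrix} \mathcal{S} \begin{pmatrix} 1 & 0\\ -\overline{\mathcal{X}} & 1 \end{pmatrix} = \begin{pmatrix} a - \langle \mathcal{X},\mathcal{T}\rangle & \mathcal{T} + b\mathcal{X}\\ -\overline{\mathcal{T}} - b\overline{\mathcal{X}} & b \end{pmatrix},\] \[\begin{pmatrix} 1 & 0\\ -\overline{\mathcal{X}} & 1 \end{pmatrix} \mathcal{S} \begin{pmatrix} 1 & \mathcal{X} \\ 0 & 1 \end{pmatrix} = \begin{pmatrix} a & \mathcal{T} + a\mathcal{X}\\ -\overline{\mathcal{T}} -a\overline{\mathcal{X}} & b - \langle \mathcal{X},\mathcal{T}\rangle \end{pmatrix}.\]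
   Context: $R$ is a commutative ring, $a,b\in R$. Suslin matrices $\mathcal{S}_{m}(v,w)$ (size $2^m$) for $v=(a_1,\dots,a_{m+1}),w=(b_1,\dots,b_{m+1})\in R^{m+1}$ are defined recursively by $\mathcal{S}_1(v,w)=\begin{pmatrix} a_1 & a_2\\ -b_2 & b_1\end{pmatrix}$, $\overline{\mathcal{S}_1(v,w)}=\begin{pmatrix} b_1 & -a_2\\ b_2 & a_1\end{pmatrix}$, and $\mathcal{S}_{m}(v,w)=\begin{pmatrix} a_1 & \mathcal{S}_{m-1}(v',w')\\ -\overline{\mathcal{S}_{m-1}(v',w')} & b_1\end{pmatrix}$, $\overline{\mathcal{S}_{m}(v,w)}=\begin{pmatrix} b_1 & -\mathcal{S}_{m-1}(v',w')\\ \overline{\mathcal{S}_{m-1}(v',w')} & a_1\end{pmatrix}$ where $v=(a_1,v')$, $w=(b_1,w')$. They satisfy $\mathcal{S}\overline{\mathcal{S}}=\overline{\mathcal{S}}\mathcal{S}=(v\cdot w^\intercal)I$. The bilinear form is $\langle \mathcal{S}_1,\mathcal{S}_2\rangle = \mathcal{S}_1\overline{\mathcal{S}_2}+\mathcal{S}_2\overline{\mathcal{S}_1}$ (a scalar). *)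

theory Defs
  imports "Jordan_Normal_Form.Matrix"
begin

text \<open>Vectors v = (a1,...,a(m+1)), w = (b1,...,b(m+1)) are lists.
  suslin_pair m v w = (S_m(v,w), conjugate of S_m(v,w)), a pair of 2^m x 2^m matrices.
  The base case m = 0 is the 1x1 pair ([a1],[b1]); with it the recursion yields exactly
  the paper's S_1 and its conjugate, and then the paper's recursion for m >= 2.\<close>
primrec suslin_pair :: "nat \<Rightarrow> 'a::comm_ring_1 list \<Rightarrow> 'a list \<Rightarrow> 'a mat \<times> 'a mat" where
  "suslin_pair 0 v w = (mat 1 1 (\<lambda>_. hd v), mat 1 1 (\<lambda>_. hd w))"
| "suslin_pair (Suc m) v w =
     (let S = fst (suslin_pair m (tl v) (tl w));
          Sb = snd (suslin_pair m (tl v) (tl w));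
          n = 2 ^ m
      in (four_block_mat (hd v \<cdot>\<^sub>m 1\<^sub>m n) S (- Sb) (hd w \<cdot>\<^sub>m 1\<^sub>m n),
          four_block_mat (hd w \<cdot>\<^sub>m 1\<^sub>m n) (- S) Sb (hd v \<cdot>\<^sub>m 1\<^sub>m n)))"

definition suslin :: "nat \<Rightarrow> 'a::comm_ring_1 list \<Rightarrow> 'a list \<Rightarrow> 'a mat" where
  "suslin m v w = fst (suslin_pair m v w)"

definition suslin_bar :: "nat \<Rightarrow> 'a::comm_ring_1 list \<Rightarrow> 'a list \<Rightarrow> 'a mat" where
  "suslin_bar m v w = snd (suslin_pair m v w)"

definition suslin_form :: "nat \<Rightarrow> 'a::comm_ring_1 list \<Rightarrow> 'a list \<Rightarrow> 'a list \<Rightarrow> 'a list \<Rightarrow> 'a mat" where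
  "suslin_form m v w v' w' =
     suslin m v w * suslin_bar m v' w' + suslin m v' w' * suslin_bar m v w"

end

theory Submission
  imports Defs
begin

lemma sI_mult[simp]: "A \<in> carrier_mat n m \<Longrightarrow> (c \<cdot>\<^sub>m 1\<^sub>m n) * (A::'a::comm_ring_1 mat) = c \<cdot>\<^sub>m A"
  by (simp add: mult_smult_assoc_mat[of _ n n _ m] left_mult_one_mat)
lemma mult_sI[simp]: "A \<in> carrier_mat m n \<Longrightarrow> (A::'a::comm_ring_1 mat) * (c \<cdot>\<^sub>m 1\<^sub>m n) = c \<cdot>\<^sub>m A"
  by (simp add: mult_smult_distrib[of _ m n _ n] right_mult_one_mat)
lemma diag_block: "four_block_mat (c \<cdot>\<^sub>m 1\<^sub>m n) (0\<^sub>m n n) (0\<^sub>m n n) (c \<cdot>\<^sub>m 1\<^sub>m n) = (c::'a::comm_ring_1) \<cdot>\<^sub>m 1\<^sub>m (n+n)"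
  by (rule eq_matI) (auto simp: four_block_mat_def)

lemma ss_mult[simp]: "(a \<cdot>\<^sub>m 1\<^sub>m n) * (b \<cdot>\<^sub>m 1\<^sub>m n) = ((a::'a::comm_ring_1) * b) \<cdot>\<^sub>m 1\<^sub>m n"
proof -
  have "(a \<cdot>\<^sub>m 1\<^sub>m n) * (b \<cdot>\<^sub>m 1\<^sub>m n) = a \<cdot>\<^sub>m (b \<cdot>\<^sub>m 1\<^sub>m n)"
    by (rule sI_mult[of _ n n]) simp
  also have "\<dots> = (a * b) \<cdot>\<^sub>m 1\<^sub>m n" by (rule eq_matI) auto
  finally show ?thesis .
qed

lemma block_polar:
  fixes T Tb T' Tb' :: "'a::comm_ring_1 mat"
  assumes cr: "T \<in> carrier_mat n n" "Tb \<in> carrier_mat n n" "T' \<in> carrier_mat n n" "Tb' \<in> carrier_mat n n"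
  and h: "T * Tb' + T' * Tb = c \<cdot>\<^sub>m 1\<^sub>m n" and h': "Tb' * T + Tb * T' = c \<cdot>\<^sub>m 1\<^sub>m n"
  shows "four_block_mat (a \<cdot>\<^sub>m 1\<^sub>m n) T (-Tb) (b \<cdot>\<^sub>m 1\<^sub>m n) * four_block_mat (b' \<cdot>\<^sub>m 1\<^sub>m n) (-T') Tb' (a' \<cdot>\<^sub>m 1\<^sub>m n)
    + four_block_mat (a' \<cdot>\<^sub>m 1\<^sub>m n) T' (-Tb') (b' \<cdot>\<^sub>m 1\<^sub>m n) * four_block_mat (b \<cdot>\<^sub>m 1\<^sub>m n) (-T) Tb (a \<cdot>\<^sub>m 1\<^sub>m n)
   = four_block_mat ((a*b'+a'*b+c) \<cdot>\<^sub>m 1\<^sub>m n) (0\<^sub>m n n) (0\<^sub>m n n) ((a*b'+a'*b+c) \<cdot>\<^sub>m 1\<^sub>m n)"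
proof -
  have h1: "(T' * Tb) $$ (i,j) = (if i = j then c else 0) - (T * Tb') $$ (i,j)" if "i < n" "j < n" for i j
    using arg_cong[OF h, of "\<lambda>M. M $$ (i,j)"] that cr by (simp del: index_mult_mat add: index_mult_mat(2,3) eq_diff_eq ac_simps)
  have h2: "(Tb * T') $$ (i,j) = (if i = j then c else 0) - (Tb' * T) $$ (i,j)" if "i < n" "j < n" for i j
    using arg_cong[OF h', of "\<lambda>M. M $$ (i,j)"] that cr by (simp del: index_mult_mat add: index_mult_mat(2,3) eq_diff_eq ac_simps)
  show ?thesis
    apply (subst mult_four_block_mat[of _ n n _ n _ n _ _ n _ n], use cr in auto)+
    apply (subst add_four_block_mat[of _ n n _ n _ n], use cr in auto)
    apply (intro cong[OF cong[OF cong[OF arg_cong[where f=four_block_mat]]]])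
    using cr apply (simp_all)
    apply (rule eq_matI; use cr in \<open>auto simp del: index_mult_mat simp: index_mult_mat(2,3) h1 h2 algebra_simps\<close>)+
    done
qed
lemma block_main:
  fixes X Xb T Tb F :: "'a::comm_ring_1 mat"
  assumes cr: "X \<in> carrier_mat n n" "Xb \<in> carrier_mat n n" "T \<in> carrier_mat n n" "Tb \<in> carrier_mat n n"
  and z1: "X * Xb = 0\<^sub>m n n" and z2: "Xb * X = 0\<^sub>m n n"
  and F1: "F = X * Tb + T * Xb" and F2: "Tb * X + Xb * T = F"
  shows "four_block_mat (1\<^sub>m n) X (0\<^sub>m n n) (1\<^sub>m n) * four_block_mat (a \<cdot>\<^sub>m 1\<^sub>m n) T (- Tb) (b \<cdot>\<^sub>m 1\<^sub>m n)
       * four_block_mat (1\<^sub>m n) (0\<^sub>m n n) (- Xb) (1\<^sub>m n)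
     = four_block_mat (a \<cdot>\<^sub>m 1\<^sub>m n - F) (T + b \<cdot>\<^sub>m X) (- Tb - b \<cdot>\<^sub>m Xb) (b \<cdot>\<^sub>m 1\<^sub>m n) \<and>
    four_block_mat (1\<^sub>m n) (0\<^sub>m n n) (- Xb) (1\<^sub>m n) * four_block_mat (a \<cdot>\<^sub>m 1\<^sub>m n) T (- Tb) (b \<cdot>\<^sub>m 1\<^sub>m n)
       * four_block_mat (1\<^sub>m n) X (0\<^sub>m n n) (1\<^sub>m n)
     = four_block_mat (a \<cdot>\<^sub>m 1\<^sub>m n) (T + a \<cdot>\<^sub>m X) (- Tb - a \<cdot>\<^sub>m Xb) (b \<cdot>\<^sub>m 1\<^sub>m n - F)"
proof
  have m1: "four_block_mat (1\<^sub>m n) X (0\<^sub>m n n) (1\<^sub>m n) * four_block_mat (a \<cdot>\<^sub>m 1\<^sub>m n) T (- Tb) (b \<cdot>\<^sub>m 1\<^sub>m n)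
     = four_block_mat (a \<cdot>\<^sub>m 1\<^sub>m n + - (X * Tb)) (T + b \<cdot>\<^sub>m X) (- Tb) (b \<cdot>\<^sub>m 1\<^sub>m n)"
    apply (subst mult_four_block_mat[of _ n n _ n _ n _ _ n _ n])
    using cr by (auto intro: uminus_carrier_mat)
  show "four_block_mat (1\<^sub>m n) X (0\<^sub>m n n) (1\<^sub>m n) * four_block_mat (a \<cdot>\<^sub>m 1\<^sub>m n) T (- Tb) (b \<cdot>\<^sub>m 1\<^sub>m n)
       * four_block_mat (1\<^sub>m n) (0\<^sub>m n n) (- Xb) (1\<^sub>m n)
     = four_block_mat (a \<cdot>\<^sub>m 1\<^sub>m n - F) (T + b \<cdot>\<^sub>m X) (- Tb - b \<cdot>\<^sub>m Xb) (b \<cdot>\<^sub>m 1\<^sub>m n)"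
    unfolding m1
    apply (subst mult_four_block_mat[of _ n n _ n _ n _ _ n _ n], use cr in \<open>auto intro: uminus_carrier_mat\<close>)
    apply (intro cong[OF cong[OF cong[OF arg_cong[where f=four_block_mat]]]])
    using cr apply (simp_all add: add_mult_distrib_mat[of _ n n _ _ n] mult_smult_assoc_mat[of _ n n _ n] z1 F1)
    apply (rule eq_matI; use cr in \<open>auto simp del: index_mult_mat simp: index_mult_mat(2,3) algebra_simps\<close>)+
    done
next
  have m1: "four_block_mat (1\<^sub>m n) (0\<^sub>m n n) (- Xb) (1\<^sub>m n) * four_block_mat (a \<cdot>\<^sub>m 1\<^sub>m n) T (- Tb) (b \<cdot>\<^sub>m 1\<^sub>m n)
     = four_block_mat (a \<cdot>\<^sub>m 1\<^sub>m n) T (- (a \<cdot>\<^sub>m Xb) + - Tb) (- (Xb * T) + b \<cdot>\<^sub>m 1\<^sub>m n)"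
    apply (subst mult_four_block_mat[of _ n n _ n _ n _ _ n _ n])
    using cr by (auto intro: uminus_carrier_mat)
  show "four_block_mat (1\<^sub>m n) (0\<^sub>m n n) (- Xb) (1\<^sub>m n) * four_block_mat (a \<cdot>\<^sub>m 1\<^sub>m n) T (- Tb) (b \<cdot>\<^sub>m 1\<^sub>m n)
       * four_block_mat (1\<^sub>m n) X (0\<^sub>m n n) (1\<^sub>m n)
     = four_block_mat (a \<cdot>\<^sub>m 1\<^sub>m n) (T + a \<cdot>\<^sub>m X) (- Tb - a \<cdot>\<^sub>m Xb) (b \<cdot>\<^sub>m 1\<^sub>m n - F)"
    unfolding m1
    apply (subst mult_four_block_mat[of _ n n _ n _ n _ _ n _ n], use cr in \<open>auto intro: uminus_carrier_mat\<close>)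
    apply (intro cong[OF cong[OF cong[OF arg_cong[where f=four_block_mat]]]])
    using cr apply (simp_all add: add_mult_distrib_mat[of _ n n _ _ n] mult_smult_assoc_mat[of _ n n _ n] z2 F2[symmetric])
    apply (rule eq_matI; use cr in \<open>auto simp del: index_mult_mat simp: index_mult_mat(2,3) algebra_simps\<close>)+
    done
qed

lemma block_norm:
  fixes T Tb :: "'a::comm_ring_1 mat"
  assumes cr: "T \<in> carrier_mat n n" "Tb \<in> carrier_mat n n"
  and h: "T * Tb = d \<cdot>\<^sub>m 1\<^sub>m n" and h': "Tb * T = d \<cdot>\<^sub>m 1\<^sub>m n"
  shows "four_block_mat (a \<cdot>\<^sub>m 1\<^sub>m n) T (-Tb) (b \<cdot>\<^sub>m 1\<^sub>m n) * four_block_mat (b \<cdot>\<^sub>m 1\<^sub>m n) (-T) Tb (a \<cdot>\<^sub>m 1\<^sub>m n)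
     = four_block_mat ((a*b+d) \<cdot>\<^sub>m 1\<^sub>m n) (0\<^sub>m n n) (0\<^sub>m n n) ((a*b+d) \<cdot>\<^sub>m 1\<^sub>m n)
   \<and> four_block_mat (b \<cdot>\<^sub>m 1\<^sub>m n) (-T) Tb (a \<cdot>\<^sub>m 1\<^sub>m n) * four_block_mat (a \<cdot>\<^sub>m 1\<^sub>m n) T (-Tb) (b \<cdot>\<^sub>m 1\<^sub>m n)
     = four_block_mat ((a*b+d) \<cdot>\<^sub>m 1\<^sub>m n) (0\<^sub>m n n) (0\<^sub>m n n) ((a*b+d) \<cdot>\<^sub>m 1\<^sub>m n)"
proof
  show "four_block_mat (a \<cdot>\<^sub>m 1\<^sub>m n) T (-Tb) (b \<cdot>\<^sub>m 1\<^sub>m n) * four_block_mat (b \<cdot>\<^sub>m 1\<^sub>m n) (-T) Tb (a \<cdot>\<^sub>m 1\<^sub>m n)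
     = four_block_mat ((a*b+d) \<cdot>\<^sub>m 1\<^sub>m n) (0\<^sub>m n n) (0\<^sub>m n n) ((a*b+d) \<cdot>\<^sub>m 1\<^sub>m n)"
    apply (subst mult_four_block_mat[of _ n n _ n _ n _ _ n _ n], use cr in \<open>auto intro: uminus_carrier_mat\<close>)
    apply (intro cong[OF cong[OF cong[OF arg_cong[where f=four_block_mat]]]])
    using cr apply (simp_all add: h h')
    apply (rule eq_matI; use cr in \<open>auto simp del: index_mult_mat simp: index_mult_mat(2,3) algebra_simps\<close>)+
    done
next
  show "four_block_mat (b \<cdot>\<^sub>m 1\<^sub>m n) (-T) Tb (a \<cdot>\<^sub>m 1\<^sub>m n) * four_block_mat (a \<cdot>\<^sub>m 1\<^sub>m n) T (-Tb) (b \<cdot>\<^sub>m 1\<^sub>m n)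
     = four_block_mat ((a*b+d) \<cdot>\<^sub>m 1\<^sub>m n) (0\<^sub>m n n) (0\<^sub>m n n) ((a*b+d) \<cdot>\<^sub>m 1\<^sub>m n)"
    apply (subst mult_four_block_mat[of _ n n _ n _ n _ _ n _ n], use cr in \<open>auto intro: uminus_carrier_mat\<close>)
    apply (intro cong[OF cong[OF cong[OF arg_cong[where f=four_block_mat]]]])
    using cr apply (simp_all add: h h')
    apply (rule eq_matI; use cr in \<open>auto simp del: index_mult_mat simp: index_mult_mat(2,3) algebra_simps\<close>)+
    done
qed

lemma suslin_carrier: "suslin m v w \<in> carrier_mat (2^m) (2^m) \<and> suslin_bar m v w \<in> carrier_mat (2^m) (2^m)"
  by (induction m arbitrary: v w) (auto simp: suslin_def suslin_bar_def Let_def)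

lemma suslin_eqs:
  "suslin (Suc m) v w = four_block_mat (hd v \<cdot>\<^sub>m 1\<^sub>m (2^m)) (suslin m (tl v) (tl w)) (- suslin_bar m (tl v) (tl w)) (hd w \<cdot>\<^sub>m 1\<^sub>m (2^m))"
  "suslin_bar (Suc m) v w = four_block_mat (hd w \<cdot>\<^sub>m 1\<^sub>m (2^m)) (- suslin m (tl v) (tl w)) (suslin_bar m (tl v) (tl w)) (hd v \<cdot>\<^sub>m 1\<^sub>m (2^m))"
  by (simp_all add: suslin_def suslin_bar_def Let_def)

lemma pow_suc_block: "(c::'a::comm_ring_1) \<cdot>\<^sub>m 1\<^sub>m (2^Suc m) = four_block_mat (c \<cdot>\<^sub>m 1\<^sub>m (2^m)) (0\<^sub>m (2^m) (2^m)) (0\<^sub>m (2^m) (2^m)) (c \<cdot>\<^sub>m 1\<^sub>m (2^m))"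
  by (simp only: power_Suc mult_2 diag_block)

lemma suslin_norm: "\<exists>d. suslin m v w * suslin_bar m v w = d \<cdot>\<^sub>m 1\<^sub>m (2^m) \<and> suslin_bar m v w * suslin m v w = d \<cdot>\<^sub>m 1\<^sub>m (2^m)"
proof (induction m arbitrary: v w)
  case 0
  then show ?case by (auto simp: suslin_def suslin_bar_def scalar_prod_def intro!: exI[of _ "hd v * hd w"] eq_matI)
next
  case (Suc m)
  obtain d where d: "suslin m (tl v) (tl w) * suslin_bar m (tl v) (tl w) = d \<cdot>\<^sub>m 1\<^sub>m (2^m)"
    "suslin_bar m (tl v) (tl w) * suslin m (tl v) (tl w) = d \<cdot>\<^sub>m 1\<^sub>m (2^m)"
    using Suc by blast
  show ?case
    unfolding suslin_eqs pow_suc_block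
    using block_norm[OF conjunct1[OF suslin_carrier] conjunct2[OF suslin_carrier] d] by blast
qed

lemma suslin_polar: "\<exists>c. suslin m v w * suslin_bar m v' w' + suslin m v' w' * suslin_bar m v w = c \<cdot>\<^sub>m 1\<^sub>m (2^m)
   \<and> suslin_bar m v' w' * suslin m v w + suslin_bar m v w * suslin m v' w' = c \<cdot>\<^sub>m 1\<^sub>m (2^m)"
proof (induction m arbitrary: v w v' w')
  case 0
  then show ?case by (auto simp: suslin_def suslin_bar_def scalar_prod_def intro!: exI[of _ "hd v * hd w' + hd v' * hd w"] eq_matI)
next
  case (Suc m)
  define T where "T = suslin m (tl v) (tl w)"
  define Tb where "Tb = suslin_bar m (tl v) (tl w)"
  define T' where "T' = suslin m (tl v') (tl w')"
  define Tb' where "Tb' = suslin_bar m (tl v') (tl w')"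
  obtain c where h: "T * Tb' + T' * Tb = c \<cdot>\<^sub>m 1\<^sub>m (2^m)" "Tb' * T + Tb * T' = c \<cdot>\<^sub>m 1\<^sub>m (2^m)"
    using Suc T_def Tb_def T'_def Tb'_def by blast
  have cr: "T \<in> carrier_mat (2^m) (2^m)" "Tb \<in> carrier_mat (2^m) (2^m)"
     "T' \<in> carrier_mat (2^m) (2^m)" "Tb' \<in> carrier_mat (2^m) (2^m)"
    using suslin_carrier T_def Tb_def T'_def Tb'_def by auto
  have crm: "- T \<in> carrier_mat (2^m) (2^m)" "- Tb \<in> carrier_mat (2^m) (2^m)"
     "- T' \<in> carrier_mat (2^m) (2^m)" "- Tb' \<in> carrier_mat (2^m) (2^m)"
    using cr by (auto intro: uminus_carrier_mat)
  have g1: "- T' * - Tb + - T * - Tb' = c \<cdot>\<^sub>m 1\<^sub>m (2^m)"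
    using h(1) cr by (simp add: comm_add_mat[of _ "2^m" "2^m"])
  have g2: "- Tb * - T' + - Tb' * - T = c \<cdot>\<^sub>m 1\<^sub>m (2^m)"
    using h(2) cr by (simp add: comm_add_mat[of _ "2^m" "2^m"])
  show ?case
    unfolding suslin_eqs pow_suc_block T_def[symmetric] Tb_def[symmetric] T'_def[symmetric] Tb'_def[symmetric]
    using block_polar[OF cr h, of "hd v" "hd w" "hd w'" "hd v'"]
      block_polar[OF crm(3) crm(4) crm(1) crm(2) g1 g2, of "hd w'" "hd v'" "hd v" "hd w"]
    by (auto simp: algebra_simps)
qed

theorem lemma3p3:
  fixes v w v' w' :: "'a::comm_ring_1 list" and a b :: 'a and k :: nat
  assumes "k \<ge> 1"
    and "length v = Suc k" and "length w = Suc k"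
    and "length v' = Suc k" and "length w' = Suc k"
    and "suslin k v w * suslin_bar k v w = 0\<^sub>m (2 ^ k) (2 ^ k)"
  shows
    "(four_block_mat (1\<^sub>m (2 ^ k)) (suslin k v w) (0\<^sub>m (2 ^ k) (2 ^ k)) (1\<^sub>m (2 ^ k))
       * four_block_mat (a \<cdot>\<^sub>m 1\<^sub>m (2 ^ k)) (suslin k v' w') (- suslin_bar k v' w') (b \<cdot>\<^sub>m 1\<^sub>m (2 ^ k))
       * four_block_mat (1\<^sub>m (2 ^ k)) (0\<^sub>m (2 ^ k) (2 ^ k)) (- suslin_bar k v w) (1\<^sub>m (2 ^ k))
     = four_block_mat (a \<cdot>\<^sub>m 1\<^sub>m (2 ^ k) - suslin_form k v w v' w')
         (suslin k v' w' + b \<cdot>\<^sub>m suslin k v w)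
         (- suslin_bar k v' w' - b \<cdot>\<^sub>m suslin_bar k v w)
         (b \<cdot>\<^sub>m 1\<^sub>m (2 ^ k))) \<and>
    (four_block_mat (1\<^sub>m (2 ^ k)) (0\<^sub>m (2 ^ k) (2 ^ k)) (- suslin_bar k v w) (1\<^sub>m (2 ^ k))
       * four_block_mat (a \<cdot>\<^sub>m 1\<^sub>m (2 ^ k)) (suslin k v' w') (- suslin_bar k v' w') (b \<cdot>\<^sub>m 1\<^sub>m (2 ^ k))
       * four_block_mat (1\<^sub>m (2 ^ k)) (suslin k v w) (0\<^sub>m (2 ^ k) (2 ^ k)) (1\<^sub>m (2 ^ k))
     = four_block_mat (a \<cdot>\<^sub>m 1\<^sub>m (2 ^ k))
         (suslin k v' w' + a \<cdot>\<^sub>m suslin k v w)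
         (- suslin_bar k v' w' - a \<cdot>\<^sub>m suslin_bar k v w)
         (b \<cdot>\<^sub>m 1\<^sub>m (2 ^ k) - suslin_form k v w v' w'))"
proof -
  let ?n = "2 ^ k"
  have cX: "suslin k v w \<in> carrier_mat ?n ?n" "suslin_bar k v w \<in> carrier_mat ?n ?n"
    "suslin k v' w' \<in> carrier_mat ?n ?n" "suslin_bar k v' w' \<in> carrier_mat ?n ?n"
    using suslin_carrier by auto
  obtain d where d: "suslin k v w * suslin_bar k v w = d \<cdot>\<^sub>m 1\<^sub>m ?n" "suslin_bar k v w * suslin k v w = d \<cdot>\<^sub>m 1\<^sub>m ?n"
    using suslin_norm by blast
  have z2: "suslin_bar k v w * suslin k v w = 0\<^sub>m ?n ?n" using d assms(6) by simp
  obtain c where c: "suslin k v w * suslin_bar k v' w' + suslin k v' w' * suslin_bar k v w = c \<cdot>\<^sub>m 1\<^sub>m ?n"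
     "suslin_bar k v' w' * suslin k v w + suslin_bar k v w * suslin k v' w' = c \<cdot>\<^sub>m 1\<^sub>m ?n"
    using suslin_polar by blast
  have F2: "suslin_bar k v' w' * suslin k v w + suslin_bar k v w * suslin k v' w' = suslin_form k v w v' w'"
    unfolding suslin_form_def using c by simp
  show ?thesis
    by (rule block_main[OF cX assms(6) z2 suslin_form_def F2])
qed

end
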